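(* Let $\chi:B_n\to D_n$ be the map with $\chi(w)=w$ if $w\in D_n$ and, if $w\notin D_n$, $\chi(w)$ is obtained from $w$ by changing the sign of its first entry $w_1$. The linear extension of $\chi$ maps $\Sigma(B_n)$ into $\Sigma(D_n)$, and the resulting map $\chi:\Sigma(B_n)\to\Sigma(D_n)$ is a morphism of algebras. Explicitly, for every $J\subseteq\{2,\dots,n-1\}$: $Y_J\mapsto Y_J$; $Y_{\{1\}\cup J}\mapsto Y_{\{1'\}\cup J}+Y_{\{1\}\cup J}+Y_{\{1',1\}\cup J}$; $Y_{\{0\}\cup J}\mapsto Y_J+Y_{\{1'\}\cup J}+Y_{\{1\}\cup J}$; $Y_{\{0,1\}\cup J}\mapsto Y_{\{1',1\}\cup J}$; equivalently, $X_J\mapsto X_J$; $X_{\{1\}\cup J}\mapsto X_{\{1',1\}\cup J}$; $X_{\{0\}\cup J}\mapsto X_{\{1'\}\cup J}+X_{\{1\}\cup J}$; $X_{\{0,1\}\cup J}\mapsto 2X_{\{1',1\}\cup J}$.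
   Context: Group algebras over $\mathbb{Q}$ with product composition. $B_n$: signed permutations $w=w_1\dots w_n$ (bijections of $\{\pm1,\dots,\pm n\}$ with $w(-i)=-w(i)$), values ordered $\cdots<-2<-1<1<2<\cdots$, $w_0=0$; $\mathrm{Des}(w)=\{i\in\{0,\dots,n-1\}:w_i>w_{i+1}\}$; in $\mathbb{Q}B_n$, $Y_J=\sum_{\mathrm{Des}(w)=J}w$ and $X_J=\sum_{I\subseteq J}Y_I$ for $J\subseteq\{0,\dots,n-1\}$; $\Sigma(B_n)=\mathrm{span}\{Y_J\}$. $D_n\subseteq B_n$: signed permutations with an even number of negative entries; the descent set of $w\in D_n$ is the subset of $\{1',1,2,\dots,n-1\}$ in which $1'$ is a descent iff $-w_1>w_2$ and $i\in[n-1]$ is a descent iff $w_i>w_{i+1}$; in $\mathbb{Q}D_n$, $Y_J=\sum_{\mathrm{Des}(w)=J}w$, $X_J=\sum_{I\subseteq J}Y_I$ for $J\subseteq\{1',1,\dots,n-1\}$, and $\Sigma(D_n)=\mathrm{span}\{Y_J\}$. *)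

theory Defs
  imports Complex_Main
begin

text \<open>Signed permutations of [n] are represented as functions w :: int => int
  with w(-i) = -w(i), restricting to a bijection of {-n..-1} u {1..n}, and
  fixing every other integer (in particular w 0 = 0, matching the convention w_0 = 0).\<close>

definition signed_range :: "nat \<Rightarrow> int set" where
  "signed_range n = {-int n..-1} \<union> {1..int n}"

definition B :: "nat \<Rightarrow> (int \<Rightarrow> int) set" where
  "B n = {w. (\<forall>i. w (-i) = - w i) \<and> bij_betw w (signed_range n) (signed_range n)
             \<and> (\<forall>i. i \<notin> signed_range n \<longrightarrow> w i = i)}"

definition D :: "nat \<Rightarrow> (int \<Rightarrow> int) set" where
  "D n = {w \<in> B n. even (card {i \<in> {1..int n}. w i < 0})}"

text \<open>Type B descent set, a subset of {0,...,n-1} (uses w 0 = 0).\<close>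
definition DesB :: "nat \<Rightarrow> (int \<Rightarrow> int) \<Rightarrow> nat set" where
  "DesB n w = {i \<in> {0..<n}. w (int i) > w (int i + 1)}"

text \<open>Type D descent labels {1',1,...,n-1}: One' stands for 1', L i for i in [n-1].\<close>
datatype dlab = One' | L nat

definition DesD :: "nat \<Rightarrow> (int \<Rightarrow> int) \<Rightarrow> dlab set" where
  "DesD n w = (if - w 1 > w 2 then {One'} else {}) \<union> L ` {i \<in> {1..<n}. w (int i) > w (int i + 1)}"

definition labelsD :: "nat \<Rightarrow> dlab set" where
  "labelsD n = insert One' (L ` {1..<n})"

text \<open>Elements of the group algebra QG (G a finite group of signed permutations) are
  functions (int => int) => rat (coefficient of each group element), supported on G.\<close>
definition conv :: "(int \<Rightarrow> int) set \<Rightarrow> ((int \<Rightarrow> int) \<Rightarrow> rat) \<Rightarrow> ((int \<Rightarrow> int) \<Rightarrow> rat)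
                      \<Rightarrow> ((int \<Rightarrow> int) \<Rightarrow> rat)" where
  "conv G a b = (\<lambda>z. \<Sum>x\<in>G. \<Sum>y\<in>G. if x \<circ> y = z then a x * b y else 0)"

definition YB :: "nat \<Rightarrow> nat set \<Rightarrow> ((int \<Rightarrow> int) \<Rightarrow> rat)" where
  "YB n J = (\<lambda>w. if w \<in> B n \<and> DesB n w = J then 1 else 0)"

definition XB :: "nat \<Rightarrow> nat set \<Rightarrow> ((int \<Rightarrow> int) \<Rightarrow> rat)" where
  "XB n J = (\<lambda>w. \<Sum>I\<in>Pow J. YB n I w)"

definition YD :: "nat \<Rightarrow> dlab set \<Rightarrow> ((int \<Rightarrow> int) \<Rightarrow> rat)" where
  "YD n J = (\<lambda>w. if w \<in> D n \<and> DesD n w = J then 1 else 0)"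

definition XD :: "nat \<Rightarrow> dlab set \<Rightarrow> ((int \<Rightarrow> int) \<Rightarrow> rat)" where
  "XD n J = (\<lambda>w. \<Sum>I\<in>Pow J. YD n I w)"

definition SigmaB :: "nat \<Rightarrow> ((int \<Rightarrow> int) \<Rightarrow> rat) set" where
  "SigmaB n = {a. \<exists>c :: nat set \<Rightarrow> rat. a = (\<lambda>w. \<Sum>J\<in>Pow {0..<n}. c J * YB n J w)}"

definition SigmaD :: "nat \<Rightarrow> ((int \<Rightarrow> int) \<Rightarrow> rat) set" where
  "SigmaD n = {a. \<exists>c :: dlab set \<Rightarrow> rat. a = (\<lambda>w. \<Sum>J\<in>Pow (labelsD n). c J * YD n J w)}"

definition chi :: "nat \<Rightarrow> (int \<Rightarrow> int) \<Rightarrow> (int \<Rightarrow> int)" where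
  "chi n w = (if w \<in> D n then w
              else (\<lambda>i. if i = 1 then - w 1 else if i = -1 then w 1 else w i))"

definition chi_lin :: "nat \<Rightarrow> ((int \<Rightarrow> int) \<Rightarrow> rat) \<Rightarrow> ((int \<Rightarrow> int) \<Rightarrow> rat)" where
  "chi_lin n a = (\<lambda>v. \<Sum>w\<in>B n. if chi n w = v then a w else 0)"

end

theory Submission
  imports Defs "HOL-Library.FuncSet"
begin

lemma SR_iff: "i \<in> signed_range n \<longleftrightarrow> i \<noteq> 0 \<and> \<bar>i\<bar> \<le> int n"
  unfolding signed_range_def by auto

lemma B_odd: "w \<in> B n \<Longrightarrow> w (-i) = - w i" unfolding B_def by auto
lemma B_bij: "w \<in> B n \<Longrightarrow> bij_betw w (signed_range n) (signed_range n)" unfolding B_def by auto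
lemma B_out: "w \<in> B n \<Longrightarrow> i \<notin> signed_range n \<Longrightarrow> w i = i" unfolding B_def by auto
lemma B_in: "w \<in> B n \<Longrightarrow> i \<in> signed_range n \<Longrightarrow> w i \<in> signed_range n"
  using B_bij bij_betwE by blast
lemma B_0: "w \<in> B n \<Longrightarrow> w 0 = 0" using B_out SR_iff by auto

lemma B_inj: assumes "w \<in> B n" shows "inj w"
proof (rule injI)
  fix i j assume e: "w i = w j"
  have ij: "inj_on w (signed_range n)" using B_bij[OF assms] bij_betw_imp_inj_on by blast
  show "i = j"
  proof (cases "i \<in> signed_range n")
    case True
    then have wi: "w i \<in> signed_range n" using B_in[OF assms] by blast
    show ?thesis
    proof (cases "j \<in> signed_range n")
      case True
      then show ?thesis using \<open>i \<in> signed_range n\<close> e ij inj_onD by metis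
    next
      case False
      then have "w j = j" using B_out[OF assms] by blast
      then show ?thesis using e wi False by simp
    qed
  next
    case False
    then have wi: "w i = i" using B_out[OF assms] by blast
    show ?thesis
    proof (cases "j \<in> signed_range n")
      case True
      then have "w j \<in> signed_range n" using B_in[OF assms] by blast
      then show ?thesis using e wi False by simp
    next
      case False
      then have "w j = j" using B_out[OF assms] by blast
      then show ?thesis using e wi by simp
    qed
  qed
qed

lemma B_comp: assumes "x \<in> B n" "y \<in> B n" shows "x \<circ> y \<in> B n"
  unfolding B_def
proof (intro CollectI conjI allI impI)
  fix i show "(x \<circ> y) (- i) = - (x \<circ> y) i" using B_odd assms by simp
next
  show "bij_betw (x \<circ> y) (signed_range n) (signed_range n)"
    using B_bij assms bij_betw_trans by blast
next
  fix i assume "i \<notin> signed_range n" then show "(x \<circ> y) i = i" using B_out[OF assms(2)] B_out[OF assms(1)] by simp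
qed

definition tt :: "int \<Rightarrow> int" where
  "tt = (\<lambda>i. if i = 1 then -1 else if i = -1 then 1 else i)"

lemma tt_tt[simp]: "tt \<circ> tt = id" by (auto simp: tt_def)
lemma tt_tt'[simp]: "tt (tt i) = i" by (auto simp: tt_def)
lemma comp_tt_tt[simp]: "f \<circ> tt \<circ> tt = f" by (simp add: comp_assoc)

lemma tt_B: assumes "n \<ge> 1" shows "tt \<in> B n"
  unfolding B_def
proof (intro CollectI conjI allI impI)
  fix i show "tt (- i) = - tt i" by (auto simp: tt_def)
next
  show "bij_betw tt (signed_range n) (signed_range n)"
    by (rule bij_betw_byWitness[where f'=tt]) (use assms in \<open>auto simp: tt_def SR_iff\<close>)
next
  fix i assume "i \<notin> signed_range n" then show "tt i = i" using assms by (auto simp: tt_def SR_iff)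
qed

definition sg :: "nat \<Rightarrow> (int \<Rightarrow> int) \<Rightarrow> int" where
  "sg n w = (\<Prod>i\<in>{1..int n}. sgn (w i))"

lemma sg_comp: assumes x: "x \<in> B n" and y: "y \<in> B n" shows "sg n (x \<circ> y) = sg n x * sg n y"
proof -
  have SRy: "\<And>i. i \<in> {1..int n} \<Longrightarrow> y i \<in> signed_range n" using B_in[OF y] by (auto simp: SR_iff)
  have 1: "\<And>i. i \<in> {1..int n} \<Longrightarrow> sgn (x (y i)) = sgn (y i) * sgn (x \<bar>y i\<bar>)"
  proof -
    fix i assume "i \<in> {1..int n}"
    then have "y i \<noteq> 0" using SRy SR_iff by blast
    show "sgn (x (y i)) = sgn (y i) * sgn (x \<bar>y i\<bar>)"
    proof (cases "y i > 0")
      case True then show ?thesis by simp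
    next
      case False
      then have "y i < 0" using \<open>y i \<noteq> 0\<close> by simp
      then have "x (y i) = - x \<bar>y i\<bar>" using B_odd[OF x, of "\<bar>y i\<bar>"] by simp
      then show ?thesis using \<open>y i < 0\<close> by (simp add: sgn_minus)
    qed
  qed
  have "sg n (x \<circ> y) = (\<Prod>i\<in>{1..int n}. sgn (y i) * sgn (x \<bar>y i\<bar>))"
    unfolding sg_def by (rule prod.cong) (auto simp: 1)
  also have "\<dots> = sg n y * (\<Prod>i\<in>{1..int n}. sgn (x \<bar>y i\<bar>))"
    unfolding sg_def by (simp add: prod.distrib)
  also have "(\<Prod>i\<in>{1..int n}. sgn (x \<bar>y i\<bar>)) = sg n x"
  proof -
    have inj: "inj_on (\<lambda>i. \<bar>y i\<bar>) {1..int n}"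
    proof (rule inj_onI)
      fix i j assume i: "i \<in> {1..int n}" and j: "j \<in> {1..int n}" and e: "\<bar>y i\<bar> = \<bar>y j\<bar>"
      then have "y i = y j \<or> y i = - y j" by arith
      then have "y i = y j \<or> y i = y (-j)" using B_odd[OF y, of j] by simp
      then have "i = j \<or> i = -j" using B_inj[OF y] by (auto dest: injD)
      then show "i = j" using i j by auto
    qed
    have sub: "(\<lambda>i. \<bar>y i\<bar>) ` {1..int n} \<subseteq> {1..int n}"
    proof
      fix j assume "j \<in> (\<lambda>i. \<bar>y i\<bar>) ` {1..int n}"
      then obtain i where "i \<in> {1..int n}" "j = \<bar>y i\<bar>" by blast
      then show "j \<in> {1..int n}" using SRy[of i] unfolding SR_iff by auto
    qed
    have im: "(\<lambda>i. \<bar>y i\<bar>) ` {1..int n} = {1..int n}"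
      by (rule endo_inj_surj[OF _ sub inj]) simp
    have "(\<Prod>i\<in>{1..int n}. sgn (x \<bar>y i\<bar>)) = (\<Prod>j\<in>(\<lambda>i. \<bar>y i\<bar>) ` {1..int n}. sgn (x j))"
      using prod.reindex[OF inj, of "\<lambda>j. sgn (x j)"] by simp
    then show ?thesis using im unfolding sg_def by simp
  qed
  finally show ?thesis by (simp add: comp_def mult.commute)
qed

lemma sg_pm: assumes "w \<in> B n" shows "sg n w = (-1) ^ card {i \<in> {1..int n}. w i < 0}"
proof -
  have nz: "\<And>i. i \<in> {1..int n} \<Longrightarrow> w i \<noteq> 0" using B_in[OF assms] by (auto simp: SR_iff)
  have "sg n w = (\<Prod>i\<in>{1..int n}. if w i < 0 then -1 else 1)"
    unfolding sg_def by (rule prod.cong[OF refl]) (use nz in \<open>force simp: sgn_if\<close>)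
  also have "\<dots> = (\<Prod>i\<in>{1..int n} \<inter> {i. w i < 0}. -1) * (\<Prod>i\<in>{1..int n} \<inter> - {i. w i < 0}. 1)"
    by (rule prod.If_cases) simp
  also have "\<dots> = (-1) ^ card ({1..int n} \<inter> {i. w i < 0})" by simp
  also have "{1..int n} \<inter> {i. w i < 0} = {i \<in> {1..int n}. w i < 0}" by auto
  finally show ?thesis .
qed

lemma D_iff: assumes "w \<in> B n" shows "w \<in> D n \<longleftrightarrow> sg n w = 1"
  using sg_pm[OF assms] assms unfolding D_def
  by (cases "even (card {i \<in> {1..int n}. w i < 0})") auto

lemma sg_cases: assumes "w \<in> B n" shows "sg n w = 1 \<or> sg n w = -1"
  using sg_pm[OF assms] by (cases "even (card {i \<in> {1..int n}. w i < 0})") auto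

lemma sg_tt: assumes "n \<ge> 1" shows "sg n tt = -1"
proof -
  have "{i \<in> {1..int n}. tt i < 0} = {1}" using assms by (auto simp: tt_def)
  then show ?thesis using sg_pm[OF tt_B[OF assms]] by simp
qed

lemma D_B: "w \<in> D n \<Longrightarrow> w \<in> B n" unfolding D_def by auto

lemma D_iff': "w \<in> D n \<longleftrightarrow> w \<in> B n \<and> sg n w = 1" using D_iff D_B by blast

lemma comp_tt_B: "n \<ge> 1 \<Longrightarrow> w \<in> B n \<Longrightarrow> w \<circ> tt \<in> B n" using B_comp tt_B by blast
lemma tt_comp_B: "n \<ge> 1 \<Longrightarrow> w \<in> B n \<Longrightarrow> tt \<circ> w \<in> B n" using B_comp tt_B by blast
lemma sg_comp_tt: "n \<ge> 1 \<Longrightarrow> w \<in> B n \<Longrightarrow> sg n (w \<circ> tt) = - sg n w"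
  using sg_comp[OF _ tt_B] sg_tt by simp
lemma sg_tt_comp: "n \<ge> 1 \<Longrightarrow> w \<in> B n \<Longrightarrow> sg n (tt \<circ> w) = - sg n w"
  using sg_comp[OF tt_B] sg_tt by simp

lemma comp_tt_D: assumes "n \<ge> 1" "w \<in> B n" shows "w \<circ> tt \<in> D n \<longleftrightarrow> w \<notin> D n"
  using D_iff[OF comp_tt_B[OF assms]] D_iff[OF assms(2)] sg_comp_tt[OF assms] sg_cases[OF assms(2)] by auto

lemma D_comp: "x \<in> D n \<Longrightarrow> y \<in> D n \<Longrightarrow> x \<circ> y \<in> D n"
  using D_iff' B_comp sg_comp by simp

lemma sigma_D: assumes "n \<ge> 1" "y \<in> D n" shows "tt \<circ> y \<circ> tt \<in> D n"
proof -
  have y: "y \<in> B n" using assms D_B by blast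
  have "tt \<circ> y \<in> B n" using tt_comp_B[OF assms(1) y] .
  then show ?thesis using D_iff'[of "tt \<circ> y \<circ> tt"] comp_tt_B[OF assms(1)] sg_comp_tt[OF assms(1)]
      sg_tt_comp[OF assms(1) y] assms(2) D_iff' by simp
qed

lemma finite_SR: "finite (signed_range n)" unfolding signed_range_def by simp

lemma finite_B: "finite (B n)"
proof -
  let ?r = "\<lambda>w::int\<Rightarrow>int. restrict w (signed_range n)"
  have inj: "inj_on ?r (B n)"
  proof (rule inj_onI)
    fix x y assume x: "x \<in> B n" and y: "y \<in> B n" and e: "?r x = ?r y"
    show "x = y"
    proof
      fix i show "x i = y i"
        using fun_cong[OF e, of i] B_out[OF x, of i] B_out[OF y, of i] by (cases "i \<in> signed_range n") auto
    qed
  qed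
  have sub: "?r ` B n \<subseteq> PiE (signed_range n) (\<lambda>_. signed_range n)"
    using B_in by auto
  have fin: "finite (PiE (signed_range n) (\<lambda>_. signed_range n))" by (simp add: finite_PiE finite_SR)
  show ?thesis using inj_on_finite[OF inj sub fin] .
qed

lemma finite_D: "finite (D n)"
  using finite_B D_B by (meson finite_subset subsetI)

lemma chi_alt: "w \<in> B n \<Longrightarrow> chi n w = (if w \<in> D n then w else w \<circ> tt)"
  unfolding chi_def by (auto simp: tt_def fun_eq_iff B_odd)

lemma comp_tt_cancel: "(f \<circ> tt = g \<circ> tt) \<longleftrightarrow> f = g"
  by (metis comp_tt_tt)

lemma sum_B_split: assumes "n \<ge> 1" shows "(\<Sum>x\<in>B n. F x) = (\<Sum>x\<in>D n. F x + F (x \<circ> tt))"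
proof -
  have BU: "B n = D n \<union> (\<lambda>x. x \<circ> tt) ` D n"
  proof
    show "B n \<subseteq> D n \<union> (\<lambda>x. x \<circ> tt) ` D n"
    proof
      fix w assume w: "w \<in> B n"
      show "w \<in> D n \<union> (\<lambda>x. x \<circ> tt) ` D n"
      proof (cases "w \<in> D n")
        case False
        then have "w \<circ> tt \<in> D n" using comp_tt_D[OF assms w] by simp
        moreover have "w = (w \<circ> tt) \<circ> tt" by simp
        ultimately show ?thesis by blast
      qed simp
    qed
    show "D n \<union> (\<lambda>x. x \<circ> tt) ` D n \<subseteq> B n" using D_B comp_tt_B[OF assms] by blast
  qed
  have disj: "D n \<inter> (\<lambda>x. x \<circ> tt) ` D n = {}"
    using comp_tt_D[OF assms] D_B by blast
  have inj: "inj_on (\<lambda>x. x \<circ> tt) (D n)" by (rule inj_onI) (simp add: comp_tt_cancel)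
  have "(\<Sum>x\<in>B n. F x) = (\<Sum>x\<in>D n. F x) + (\<Sum>x\<in>(\<lambda>x. x \<circ> tt) ` D n. F x)"
    unfolding BU by (rule sum.union_disjoint) (use finite_D disj in auto)
  also have "(\<Sum>x\<in>(\<lambda>x. x \<circ> tt) ` D n. F x) = (\<Sum>x\<in>D n. F (x \<circ> tt))"
    using sum.reindex[OF inj] by simp
  finally show ?thesis by (simp add: sum.distrib)
qed

lemma chi_lin_val: assumes "n \<ge> 1"
  shows "chi_lin n f v = (if v \<in> D n then f v + f (v \<circ> tt) else 0)"
proof -
  have "chi_lin n f v = (\<Sum>x\<in>D n. (if chi n x = v then f x else 0) + (if chi n (x \<circ> tt) = v then f (x \<circ> tt) else 0))"
    unfolding chi_lin_def by (rule sum_B_split[OF assms])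
  also have "\<dots> = (\<Sum>x\<in>D n. (if x = v then f v + f (v \<circ> tt) else 0))"
  proof (rule sum.cong[OF refl])
    fix x assume x: "x \<in> D n"
    have xB: "x \<in> B n" using x D_B by blast
    have c1: "chi n x = x" using chi_alt[OF xB] x by simp
    have c2: "chi n (x \<circ> tt) = x" using chi_alt[OF comp_tt_B[OF assms xB]] comp_tt_D[OF assms xB] x by simp
    show "(if chi n x = v then f x else 0) + (if chi n (x \<circ> tt) = v then f (x \<circ> tt) else 0) = (if x = v then f v + f (v \<circ> tt) else 0)"
      unfolding c1 c2 by auto
  qed
  also have "\<dots> = (if v \<in> D n then f v + f (v \<circ> tt) else 0)"
    using finite_D by simp
  finally show ?thesis .
qed

lemma SigmaB_rep: assumes "a \<in> SigmaB n" obtains c where "\<And>w. a w = (if w \<in> B n then c (DesB n w) else 0)"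
proof -
  obtain c where a: "a = (\<lambda>w. \<Sum>J\<in>Pow {0..<n}. c J * YB n J w)" using assms unfolding SigmaB_def by blast
  have "a w = (if w \<in> B n then c (DesB n w) else 0)" for w
  proof (cases "w \<in> B n")
    case True
    have "a w = (\<Sum>J\<in>Pow {0..<n}. if DesB n w = J then c J else 0)"
      unfolding a YB_def using True by (intro sum.cong) auto
    also have "\<dots> = c (DesB n w)"
    proof -
      have "DesB n w \<in> Pow {0..<n}" unfolding DesB_def by auto
      then show ?thesis by (simp add: sum.delta)
    qed
    finally show ?thesis using True by simp
  next
    case False
    then show ?thesis unfolding a YB_def by simp
  qed
  then show ?thesis using that by blast
qed

lemma B_SR1: assumes "w \<in> B n" "1 \<le> i" "i \<le> int n" shows "w i \<noteq> 0" "\<bar>w i\<bar> \<le> int n"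
  using B_in[OF assms(1), of i] assms(2,3) unfolding SR_iff by auto

lemma B_abs_ne: assumes "w \<in> B n" "1 \<le> i" "1 \<le> j" "i \<noteq> j" shows "w i \<noteq> w j" "w i \<noteq> - w j"
proof -
  show "w i \<noteq> w j" using B_inj[OF assms(1)] assms(4) by (auto dest: injD)
  have "w i \<noteq> w (-j)" using B_inj[OF assms(1)] assms by (auto dest: injD)
  then show "w i \<noteq> - w j" using B_odd[OF assms(1)] by simp
qed

lemma tt_less: assumes "p \<noteq> 0" "q \<noteq> 0" "p \<noteq> q" "p \<noteq> - q" shows "(tt q < tt p) = (q < p)"
proof -
  consider "p = 1" | "p = -1" | "p \<noteq> 1 \<and> p \<noteq> -1" by blast
  then show ?thesis
  proof cases
    case 1 then show ?thesis using assms by (simp add: tt_def; arith)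
  next
    case 2 then show ?thesis using assms by (simp add: tt_def; arith)
  next
    case 3 then show ?thesis using assms unfolding tt_def by (cases "q = 1 \<or> q = -1") auto
  qed
qed

lemma DesB_tt: assumes z: "z \<in> B n" and z1: "\<bar>z 1\<bar> \<noteq> 1" shows "DesB n (tt \<circ> z) = DesB n z"
  unfolding DesB_def
proof (intro Collect_cong conj_cong refl)
  fix i assume i: "i \<in> {0..<n}"
  show "((tt \<circ> z) (int i + 1) < (tt \<circ> z) (int i)) = (z (int i + 1) < z (int i))"
  proof (cases "i = 0")
    case True
    have "z 1 \<noteq> 0" using B_SR1[OF z, of 1] i by auto
    then show ?thesis using True B_0[OF z] z1 by (auto simp: tt_def)
  next
    case False
    have q0: "z (int i + 1) \<noteq> 0" using B_SR1[OF z, of "int i + 1"] i by auto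
    have p0: "z (int i) \<noteq> 0" using B_SR1[OF z, of "int i"] i False by auto
    have ne1: "z (int i) \<noteq> z (int i + 1)" "z (int i) \<noteq> - z (int i + 1)"
      using B_abs_ne[OF z, of "int i" "int i + 1"] False by auto
    show ?thesis using tt_less[OF p0 q0 ne1] by simp
  qed
qed

lemma tt_commute: assumes y: "y \<in> B n" and y1: "\<bar>y 1\<bar> = 1" shows "tt \<circ> y = y \<circ> tt"
proof
  fix i
  have ym: "y (-1) = - y 1" using B_odd[OF y] by simp
  show "(tt \<circ> y) i = (y \<circ> tt) i"
  proof (cases "i = 1 \<or> i = -1")
    case True
    then show ?thesis using y1 ym by (auto simp: tt_def)
  next
    case False
    have "y i \<noteq> y 1" "y i \<noteq> y (-1)" using B_inj[OF y] False by (auto dest: injD)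
    then have "y i \<noteq> 1" "y i \<noteq> -1" using y1 ym by auto
    then show ?thesis using False by (auto simp: tt_def)
  qed
qed

lemma invariance: assumes n: "n \<ge> 1" and b: "b \<in> SigmaB n" and y: "y \<in> B n"
  shows "b (tt \<circ> y \<circ> tt) + b (tt \<circ> y) = b y + b (y \<circ> tt)"
proof (cases "\<bar>y 1\<bar> = 1")
  case True
  have "tt \<circ> y \<circ> tt = y" using tt_commute[OF y True] by (simp add: comp_assoc)
  then show ?thesis using tt_commute[OF y True] by simp
next
  case False
  obtain c where c: "\<And>w. b w = (if w \<in> B n then c (DesB n w) else 0)" using SigmaB_rep[OF b] by blast
  have yt: "y \<circ> tt \<in> B n" using comp_tt_B[OF n y] .
  have yt1: "\<bar>(y \<circ> tt) 1\<bar> \<noteq> 1" using False B_odd[OF y, of 1] by (simp add: tt_def)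
  have "tt \<circ> y \<circ> tt = tt \<circ> (y \<circ> tt)" by (simp add: comp_assoc)
  moreover have "b (tt \<circ> (y \<circ> tt)) = b (y \<circ> tt)"
    by (metis c DesB_tt[OF yt yt1] tt_comp_B[OF n yt] yt)
  ultimately have e1: "b (tt \<circ> y \<circ> tt) = b (y \<circ> tt)" by simp
  have e2: "b (tt \<circ> y) = b y" by (metis c DesB_tt[OF y False] tt_comp_B[OF n y] y)
  show ?thesis using e1 e2 by simp
qed

lemma tt_tt_left[simp]: "tt \<circ> (tt \<circ> f) = f" by (simp add: comp_assoc[symmetric])

lemma conv_B_split: assumes n: "n \<ge> 1"
  shows "conv (B n) a b z = (\<Sum>x\<in>D n. \<Sum>y\<in>D n.
     (if x \<circ> y = z then a x * b y else 0) + (if x \<circ> (y \<circ> tt) = z then a x * b (y \<circ> tt) else 0)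
   + (if (x \<circ> tt) \<circ> y = z then a (x \<circ> tt) * b y else 0)
   + (if (x \<circ> tt) \<circ> (y \<circ> tt) = z then a (x \<circ> tt) * b (y \<circ> tt) else 0))"
proof -
  have "conv (B n) a b z = (\<Sum>x\<in>D n. (\<Sum>y\<in>D n.
     (if x \<circ> y = z then a x * b y else 0) + (if x \<circ> (y \<circ> tt) = z then a x * b (y \<circ> tt) else 0))
   + (\<Sum>y\<in>D n. (if (x \<circ> tt) \<circ> y = z then a (x \<circ> tt) * b y else 0)
   + (if (x \<circ> tt) \<circ> (y \<circ> tt) = z then a (x \<circ> tt) * b (y \<circ> tt) else 0)))"
    by (simp only: conv_def sum_B_split[OF n])
  also have "\<dots> = (\<Sum>x\<in>D n. \<Sum>y\<in>D n.
     (if x \<circ> y = z then a x * b y else 0) + (if x \<circ> (y \<circ> tt) = z then a x * b (y \<circ> tt) else 0)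
   + (if (x \<circ> tt) \<circ> y = z then a (x \<circ> tt) * b y else 0)
   + (if (x \<circ> tt) \<circ> (y \<circ> tt) = z then a (x \<circ> tt) * b (y \<circ> tt) else 0))"
    by (simp only: sum.distrib[symmetric] add.assoc)
  finally show ?thesis .
qed

lemma neq_by_sg: "sg n f \<noteq> sg n g \<Longrightarrow> f \<noteq> g" by auto

lemma morphism: assumes n: "n \<ge> 1" and a: "a \<in> SigmaB n" and b: "b \<in> SigmaB n"
  shows "chi_lin n (conv (B n) a b) v = conv (D n) (chi_lin n a) (chi_lin n b) v"
proof (cases "v \<in> D n")
  case False
  have "conv (D n) (chi_lin n a) (chi_lin n b) v = 0"
    unfolding conv_def using False D_comp by (intro sum.neutral ballI) auto
  then show ?thesis using False chi_lin_val[OF n] by simp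
next
  case True
  have vB: "v \<in> B n" using True D_B by blast
  have sv: "sg n v = 1" using True D_iff' by blast
  have svt: "sg n (v \<circ> tt) = -1" using sg_comp_tt[OF n vB] sv by simp
  have step: "((if x \<circ> y = v then a x * b y else 0) + (if x \<circ> (y \<circ> tt) = v then a x * b (y \<circ> tt) else 0)
   + (if (x \<circ> tt) \<circ> y = v then a (x \<circ> tt) * b y else 0)
   + (if (x \<circ> tt) \<circ> (y \<circ> tt) = v then a (x \<circ> tt) * b (y \<circ> tt) else 0))
   + ((if x \<circ> y = v \<circ> tt then a x * b y else 0) + (if x \<circ> (y \<circ> tt) = v \<circ> tt then a x * b (y \<circ> tt) else 0)
   + (if (x \<circ> tt) \<circ> y = v \<circ> tt then a (x \<circ> tt) * b y else 0)
   + (if (x \<circ> tt) \<circ> (y \<circ> tt) = v \<circ> tt then a (x \<circ> tt) * b (y \<circ> tt) else 0))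
   = (if x \<circ> y = v then a x * b y + a x * b (y \<circ> tt) else 0)
   + (if x \<circ> (tt \<circ> y \<circ> tt) = v then a (x \<circ> tt) * b (y \<circ> tt) + a (x \<circ> tt) * b y else 0)"
    if x: "x \<in> D n" and y: "y \<in> D n" for x y
  proof -
    have xB: "x \<in> B n" and yB: "y \<in> B n" using x y D_B by auto
    have sx: "sg n x = 1" and sy: "sg n y = 1" using x y D_iff' by auto
    have xt: "x \<circ> tt \<in> B n" and yt: "y \<circ> tt \<in> B n" using comp_tt_B[OF n] xB yB by auto
    have sxt: "sg n (x \<circ> tt) = -1" and syt: "sg n (y \<circ> tt) = -1"
      using sg_comp_tt[OF n] xB yB sx sy by auto
    have f1: "x \<circ> y \<noteq> v \<circ> tt"
      by (rule neq_by_sg[where n=n]) (simp add: sg_comp[OF xB yB] sx sy svt)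
    have f2: "x \<circ> (y \<circ> tt) \<noteq> v"
      by (rule neq_by_sg[where n=n]) (simp add: sg_comp[OF xB yt] sx syt sv)
    have f3: "(x \<circ> (y \<circ> tt) = v \<circ> tt) \<longleftrightarrow> x \<circ> y = v"
      using comp_tt_cancel[of "x \<circ> y" v] by (simp add: comp_assoc)
    have f4: "(x \<circ> tt) \<circ> y \<noteq> v"
      by (rule neq_by_sg[where n=n]) (simp add: sg_comp[OF xt yB] sxt sy sv)
    have f5: "((x \<circ> tt) \<circ> y = v \<circ> tt) \<longleftrightarrow> x \<circ> (tt \<circ> y \<circ> tt) = v"
      using comp_tt_cancel[of "x \<circ> tt \<circ> y" "v \<circ> tt"] by (simp add: comp_assoc)
    have f6: "((x \<circ> tt) \<circ> (y \<circ> tt) = v) \<longleftrightarrow> x \<circ> (tt \<circ> y \<circ> tt) = v"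
      by (simp add: comp_assoc)
    have f7: "(x \<circ> tt) \<circ> (y \<circ> tt) \<noteq> v \<circ> tt"
      by (rule neq_by_sg[where n=n]) (simp add: sg_comp[OF xt yt] sxt syt svt)
    show ?thesis using f1 f2 f4 f7 unfolding f3 f5 f6 by (simp add: algebra_simps)
  qed
  have reidx: "(\<Sum>y\<in>D n. if x \<circ> (tt \<circ> y \<circ> tt) = v then a (x \<circ> tt) * b (y \<circ> tt) + a (x \<circ> tt) * b y else 0)
     = (\<Sum>y\<in>D n. if x \<circ> y = v then a (x \<circ> tt) * (b (tt \<circ> y) + b (tt \<circ> y \<circ> tt)) else 0)" for x
  proof (rule sum.reindex_bij_witness[where i="\<lambda>y. tt \<circ> y \<circ> tt" and j="\<lambda>y. tt \<circ> y \<circ> tt"])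
    fix y assume "y \<in> D n"
    then show "tt \<circ> y \<circ> tt \<in> D n" using sigma_D[OF n] by blast
    show "tt \<circ> (tt \<circ> y \<circ> tt) \<circ> tt = y" by (simp add: comp_assoc)
    show "tt \<circ> (tt \<circ> y \<circ> tt) \<circ> tt = y" by (simp add: comp_assoc)
    show "tt \<circ> y \<circ> tt \<in> D n" using sigma_D[OF n] \<open>y \<in> D n\<close> by blast
    show "(if x \<circ> (tt \<circ> y \<circ> tt) = v then a (x \<circ> tt) * (b (tt \<circ> (tt \<circ> y \<circ> tt)) + b (tt \<circ> (tt \<circ> y \<circ> tt) \<circ> tt)) else 0)
       = (if x \<circ> (tt \<circ> y \<circ> tt) = v then a (x \<circ> tt) * b (y \<circ> tt) + a (x \<circ> tt) * b y else 0)"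
      by (simp add: comp_assoc algebra_simps)
  qed
  have "chi_lin n (conv (B n) a b) v = conv (B n) a b v + conv (B n) a b (v \<circ> tt)"
    using chi_lin_val[OF n] True by simp
  also have "\<dots> = (\<Sum>x\<in>D n. \<Sum>y\<in>D n. (if x \<circ> y = v then a x * b y + a x * b (y \<circ> tt) else 0)
   + (if x \<circ> (tt \<circ> y \<circ> tt) = v then a (x \<circ> tt) * b (y \<circ> tt) + a (x \<circ> tt) * b y else 0))"
    unfolding conv_B_split[OF n] sum.distrib[symmetric] by (intro sum.cong refl step)
  also have "\<dots> = (\<Sum>x\<in>D n. \<Sum>y\<in>D n. (if x \<circ> y = v then a x * b y + a x * b (y \<circ> tt) else 0)
   + (if x \<circ> y = v then a (x \<circ> tt) * (b (tt \<circ> y) + b (tt \<circ> y \<circ> tt)) else 0))"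
    by (simp only: sum.distrib reidx)
  also have "\<dots> = (\<Sum>x\<in>D n. \<Sum>y\<in>D n. if x \<circ> y = v then (a x + a (x \<circ> tt)) * (b y + b (y \<circ> tt)) else 0)"
  proof (intro sum.cong refl)
    fix x y assume "y \<in> D n"
    then have "b (tt \<circ> y \<circ> tt) + b (tt \<circ> y) = b y + b (y \<circ> tt)"
      using invariance[OF n b] D_B by blast
    then show "(if x \<circ> y = v then a x * b y + a x * b (y \<circ> tt) else 0)
     + (if x \<circ> y = v then a (x \<circ> tt) * (b (tt \<circ> y) + b (tt \<circ> y \<circ> tt)) else 0)
     = (if x \<circ> y = v then (a x + a (x \<circ> tt)) * (b y + b (y \<circ> tt)) else 0)"
      by (simp add: algebra_simps)
  qed
  also have "\<dots> = conv (D n) (chi_lin n a) (chi_lin n b) v"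
    unfolding conv_def by (intro sum.cong refl) (simp add: chi_lin_val[OF n])
  finally show ?thesis .
qed

lemma natset_eq: "(X::nat set) = K \<longleftrightarrow> (0 \<in> X \<longleftrightarrow> 0 \<in> K) \<and> (1 \<in> X \<longleftrightarrow> 1 \<in> K) \<and> (\<forall>i\<ge>2. i \<in> X \<longleftrightarrow> i \<in> K)"
proof
  assume h: "(0 \<in> X \<longleftrightarrow> 0 \<in> K) \<and> (1 \<in> X \<longleftrightarrow> 1 \<in> K) \<and> (\<forall>i\<ge>2. i \<in> X \<longleftrightarrow> i \<in> K)"
  show "X = K"
  proof (rule set_eqI)
    fix i show "i \<in> X \<longleftrightarrow> i \<in> K" using h by (cases "i = 0"; cases "i = 1") auto
  qed
qed simp

lemma natset_sub: "(X::nat set) \<subseteq> K \<longleftrightarrow> (0 \<in> X \<longrightarrow> 0 \<in> K) \<and> (1 \<in> X \<longrightarrow> 1 \<in> K) \<and> (\<forall>i\<ge>2. i \<in> X \<longrightarrow> i \<in> K)"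
proof
  assume h: "(0 \<in> X \<longrightarrow> 0 \<in> K) \<and> (1 \<in> X \<longrightarrow> 1 \<in> K) \<and> (\<forall>i\<ge>2. i \<in> X \<longrightarrow> i \<in> K)"
  show "X \<subseteq> K"
  proof
    fix i assume "i \<in> X" then show "i \<in> K" using h by (cases "i = 0"; cases "i = 1") auto
  qed
qed auto

lemma dset_eq: "(X::dlab set) = K \<longleftrightarrow> (One' \<in> X \<longleftrightarrow> One' \<in> K) \<and> (L 0 \<in> X \<longleftrightarrow> L 0 \<in> K)
   \<and> (L 1 \<in> X \<longleftrightarrow> L 1 \<in> K) \<and> (\<forall>i\<ge>2. L i \<in> X \<longleftrightarrow> L i \<in> K)"
proof
  assume h: "(One' \<in> X \<longleftrightarrow> One' \<in> K) \<and> (L 0 \<in> X \<longleftrightarrow> L 0 \<in> K)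
   \<and> (L 1 \<in> X \<longleftrightarrow> L 1 \<in> K) \<and> (\<forall>i\<ge>2. L i \<in> X \<longleftrightarrow> L i \<in> K)"
  show "X = K"
  proof (rule set_eqI)
    fix x show "x \<in> X \<longleftrightarrow> x \<in> K"
    proof (cases x)
      case (L i) then show ?thesis using h by (cases "i = 0"; cases "i = 1") auto
    qed (use h in simp)
  qed
qed simp

lemma dset_sub: "(X::dlab set) \<subseteq> K \<longleftrightarrow> (One' \<in> X \<longrightarrow> One' \<in> K) \<and> (L 0 \<in> X \<longrightarrow> L 0 \<in> K)
   \<and> (L 1 \<in> X \<longrightarrow> L 1 \<in> K) \<and> (\<forall>i\<ge>2. L i \<in> X \<longrightarrow> L i \<in> K)"
proof
  assume h: "(One' \<in> X \<longrightarrow> One' \<in> K) \<and> (L 0 \<in> X \<longrightarrow> L 0 \<in> K)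
   \<and> (L 1 \<in> X \<longrightarrow> L 1 \<in> K) \<and> (\<forall>i\<ge>2. L i \<in> X \<longrightarrow> L i \<in> K)"
  show "X \<subseteq> K"
  proof
    fix x assume xX: "x \<in> X" show "x \<in> K"
    proof (cases x)
      case (L i) then show ?thesis using h xX by (cases "i = 0"; cases "i = 1") auto
    qed (use h xX in simp)
  qed
qed auto

lemma Lmem[simp]: "L i \<in> L ` J \<longleftrightarrow> i \<in> J" by auto
lemma One'_notin[simp]: "One' \<notin> L ` J" by auto

context
  fixes n :: nat and v :: "int \<Rightarrow> int"
  assumes n2: "n \<ge> 2" and vB: "v \<in> B n"
begin

lemma v_facts: "v 1 \<noteq> 0" "v 1 \<noteq> v 2" "v 1 \<noteq> - v 2"
  using B_SR1[OF vB, of 1] B_abs_ne[OF vB, of 1 2] n2 by auto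

lemma tt_int[simp]: "i \<ge> 2 \<Longrightarrow> tt (int i) = int i" "i \<ge> 2 \<Longrightarrow> tt (int i + 1) = int i + 1"
  by (auto simp: tt_def)

lemma memB0: "0 \<in> DesB n v \<longleftrightarrow> v 1 < 0" using n2 B_0[OF vB] by (auto simp: DesB_def)
lemma memB1: "1 \<in> DesB n v \<longleftrightarrow> v 2 < v 1" using n2 by (auto simp: DesB_def)
lemma memBt0: "0 \<in> DesB n (v \<circ> tt) \<longleftrightarrow> 0 < v 1"
  using n2 B_0[OF vB] B_odd[OF vB, of 1] by (auto simp: DesB_def tt_def)
lemma memBt1: "1 \<in> DesB n (v \<circ> tt) \<longleftrightarrow> v 2 < - v 1"
  using n2 B_odd[OF vB, of 1] by (auto simp: DesB_def tt_def)
lemma memBti: "i \<ge> 2 \<Longrightarrow> i \<in> DesB n (v \<circ> tt) \<longleftrightarrow> i \<in> DesB n v"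
  by (auto simp: DesB_def)
lemma memDO: "One' \<in> DesD n v \<longleftrightarrow> v 2 < - v 1" by (auto simp: DesD_def)
lemma memDL0: "L 0 \<notin> DesD n v" by (auto simp: DesD_def)
lemma memDL1: "L 1 \<in> DesD n v \<longleftrightarrow> v 2 < v 1" using n2 by (auto simp: DesD_def)
lemma memDLi: "i \<ge> 2 \<Longrightarrow> L i \<in> DesD n v \<longleftrightarrow> i \<in> DesB n v" by (auto simp: DesD_def DesB_def)

end

lemma ge2_ne[simp]: "2 \<le> i \<Longrightarrow> i \<noteq> (0::nat)" "2 \<le> i \<Longrightarrow> i \<noteq> 1" "2 \<le> i \<Longrightarrow> i \<noteq> Suc 0"
  by auto

lemma XB_at: "finite K \<Longrightarrow> XB n K w = (if w \<in> B n \<and> DesB n w \<subseteq> K then 1 else 0)"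
  unfolding XB_def YB_def by (cases "w \<in> B n") (auto simp: sum.delta')

lemma XD_at: "finite K \<Longrightarrow> XD n K w = (if w \<in> D n \<and> DesD n w \<subseteq> K then 1 else 0)"
  unfolding XD_def YD_def by (cases "w \<in> D n") (auto simp: sum.delta')

lemma chiY_at: assumes "n \<ge> 1" "v \<in> D n"
  shows "chi_lin n (YB n K) v = (if DesB n v = K then 1 else 0) + (if DesB n (v \<circ> tt) = K then 1 else 0)"
  using assms chi_lin_val[OF assms(1)] D_B comp_tt_B[OF assms(1)] by (simp add: YB_def)

lemma chiX_at: assumes "n \<ge> 1" "v \<in> D n" "finite K"
  shows "chi_lin n (XB n K) v = (if DesB n v \<subseteq> K then 1 else 0) + (if DesB n (v \<circ> tt) \<subseteq> K then 1 else 0)"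
  using assms chi_lin_val[OF assms(1)] D_B comp_tt_B[OF assms(1)] by (simp add: XB_at)

lemma YD_at: "v \<in> D n \<Longrightarrow> YD n K v = (if DesD n v = K then 1 else 0)" by (simp add: YD_def)
lemma XD_at': "v \<in> D n \<Longrightarrow> finite K \<Longrightarrow> XD n K v = (if DesD n v \<subseteq> K then 1 else 0)" by (simp add: XD_at)

lemma out_zero: assumes "n \<ge> 1" "v \<notin> D n"
  shows "chi_lin n f v = 0" "YD n K v = 0" "XD n K v = 0"
  using assms chi_lin_val[OF assms(1)] by (auto simp: YD_def XD_def)

lemma identities:
  assumes n2: "n \<ge> 2" and J: "J \<subseteq> {2..<n}" and v: "v \<in> D n"
  shows "chi_lin n (YB n J) v = YD n (L ` J) v"
    "chi_lin n (YB n ({1} \<union> J)) v = YD n ({One'} \<union> L ` J) v + YD n ({L 1} \<union> L ` J) v + YD n ({One', L 1} \<union> L ` J) v"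
    "chi_lin n (YB n ({0} \<union> J)) v = YD n (L ` J) v + YD n ({One'} \<union> L ` J) v + YD n ({L 1} \<union> L ` J) v"
    "chi_lin n (YB n ({0, 1} \<union> J)) v = YD n ({One', L 1} \<union> L ` J) v"
    "chi_lin n (XB n J) v = XD n (L ` J) v"
    "chi_lin n (XB n ({1} \<union> J)) v = XD n ({One', L 1} \<union> L ` J) v"
    "chi_lin n (XB n ({0} \<union> J)) v = XD n ({One'} \<union> L ` J) v + XD n ({L 1} \<union> L ` J) v"
    "chi_lin n (XB n ({0, 1} \<union> J)) v = 2 * XD n ({One', L 1} \<union> L ` J) v"
proof -
  have n1: "n \<ge> 1" using n2 by simp
  have vB: "v \<in> B n" using v D_B by blast
  have fin: "finite J" using J finite_subset by blast
  have J0: "0 \<notin> J" "1 \<notin> J" "Suc 0 \<notin> J" using J by auto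
  note vf = v_facts[OF n2 vB]
  note mems = memB0[OF n2 vB] memB1[OF n2 vB] memBt0[OF n2 vB] memBt1[OF n2 vB] memBti[OF n2 vB]
    memDO[OF n2 vB] memDL0[OF n2 vB] memDL1[OF n2 vB] memDLi[OF n2 vB]
    memB1[OF n2 vB, unfolded One_nat_def] memBt1[OF n2 vB, unfolded One_nat_def] memDL1[OF n2 vB, unfolded One_nat_def]
  note base = chiY_at[OF n1 v] chiX_at[OF n1 v] YD_at[OF v] XD_at'[OF v] fin J0 mems
  show "chi_lin n (YB n J) v = YD n (L ` J) v"
    using vf by (simp add: base natset_eq dset_eq; auto?)
  show "chi_lin n (YB n ({1} \<union> J)) v = YD n ({One'} \<union> L ` J) v + YD n ({L 1} \<union> L ` J) v + YD n ({One', L 1} \<union> L ` J) v"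
    using vf by (simp add: base natset_eq dset_eq; auto?)
  show "chi_lin n (YB n ({0} \<union> J)) v = YD n (L ` J) v + YD n ({One'} \<union> L ` J) v + YD n ({L 1} \<union> L ` J) v"
    using vf by (simp add: base natset_eq dset_eq; auto?)
  show "chi_lin n (YB n ({0, 1} \<union> J)) v = YD n ({One', L 1} \<union> L ` J) v"
    using vf by (simp add: base natset_eq dset_eq; auto?)
  show "chi_lin n (XB n J) v = XD n (L ` J) v"
    using vf by (simp add: base natset_sub dset_sub; auto?)
  show "chi_lin n (XB n ({1} \<union> J)) v = XD n ({One', L 1} \<union> L ` J) v"
    using vf by (simp add: base natset_sub dset_sub; auto?)
  show "chi_lin n (XB n ({0} \<union> J)) v = XD n ({One'} \<union> L ` J) v + XD n ({L 1} \<union> L ` J) v"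
    using vf by (simp add: base natset_sub dset_sub; auto?)
  show "chi_lin n (XB n ({0, 1} \<union> J)) v = 2 * XD n ({One', L 1} \<union> L ` J) v"
    using vf by (simp add: base natset_sub dset_sub; auto?)
qed

lemma SigmaD_mem: "(\<lambda>v. if v \<in> D n then d (DesD n v) else 0) \<in> SigmaD n"
  unfolding SigmaD_def
proof (intro CollectI exI[where x=d] ext)
  fix v
  show "(if v \<in> D n then d (DesD n v) else 0) = (\<Sum>J\<in>Pow (labelsD n). d J * YD n J v)"
  proof (cases "v \<in> D n")
    case True
    have sub: "DesD n v \<in> Pow (labelsD n)" unfolding DesD_def labelsD_def by auto
    have "(\<Sum>J\<in>Pow (labelsD n). d J * YD n J v) = (\<Sum>J\<in>Pow (labelsD n). if DesD n v = J then d J else 0)"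
      using True by (intro sum.cong refl) (simp add: YD_def)
    also have "\<dots> = d (DesD n v)" using sub by (simp add: labelsD_def)
    finally show ?thesis using True by simp
  qed (simp add: YD_def)
qed

definition f1 :: "dlab set \<Rightarrow> nat set" where
  "f1 K = {i. (i = 0 \<and> One' \<in> K \<and> L 1 \<notin> K) \<or> (i = 1 \<and> L 1 \<in> K) \<or> (2 \<le> i \<and> L i \<in> K)}"
definition f2 :: "dlab set \<Rightarrow> nat set" where
  "f2 K = {i. (i = 0 \<and> \<not> (One' \<in> K \<and> L 1 \<notin> K)) \<or> (i = 1 \<and> One' \<in> K) \<or> (2 \<le> i \<and> L i \<in> K)}"

lemma f12: assumes n2: "n \<ge> 2" and v: "v \<in> D n"
  shows "(f1 (DesD n v) = DesB n v \<and> f2 (DesD n v) = DesB n (v \<circ> tt))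
       \<or> (f1 (DesD n v) = DesB n (v \<circ> tt) \<and> f2 (DesD n v) = DesB n v)"
proof -
  have vB: "v \<in> B n" using v D_B by blast
  note vf = v_facts[OF n2 vB]
  note mems = memB0[OF n2 vB] memB1[OF n2 vB] memBt0[OF n2 vB] memBt1[OF n2 vB] memBti[OF n2 vB]
    memDO[OF n2 vB] memDL0[OF n2 vB] memDL1[OF n2 vB] memDLi[OF n2 vB]
    memB1[OF n2 vB, unfolded One_nat_def] memBt1[OF n2 vB, unfolded One_nat_def] memDL1[OF n2 vB, unfolded One_nat_def]
  show ?thesis using vf by (simp add: natset_eq f1_def f2_def mems; auto?)
qed

lemma chi_SigmaD: assumes n2: "n \<ge> 2" and a: "a \<in> SigmaB n" shows "chi_lin n a \<in> SigmaD n"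
proof -
  have n1: "n \<ge> 1" using n2 by simp
  obtain c where c: "\<And>w. a w = (if w \<in> B n then c (DesB n w) else 0)" using SigmaB_rep[OF a] by blast
  have "chi_lin n a = (\<lambda>v. if v \<in> D n then (\<lambda>K. c (f1 K) + c (f2 K)) (DesD n v) else 0)"
  proof
    fix v show "chi_lin n a v = (if v \<in> D n then (\<lambda>K. c (f1 K) + c (f2 K)) (DesD n v) else 0)"
    proof (cases "v \<in> D n")
      case True
      have vB: "v \<in> B n" using True D_B by blast
      have "chi_lin n a v = c (DesB n v) + c (DesB n (v \<circ> tt))"
        using chi_lin_val[OF n1] True c vB comp_tt_B[OF n1 vB] by simp
      then show ?thesis using f12[OF n2 True] True by auto
    qed (simp add: chi_lin_val[OF n1])
  qed
  then show ?thesis using SigmaD_mem by simp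
qed

lemma extD: assumes "n \<ge> 1" "\<And>v. v \<in> D n \<Longrightarrow> chi_lin n h v = g v" "\<And>v. v \<notin> D n \<Longrightarrow> g v = 0"
  shows "chi_lin n h = g"
proof
  fix v show "chi_lin n h v = g v" using assms chi_lin_val[OF assms(1)] by (cases "v \<in> D n") auto
qed

theorem proposition2p1:
  fixes n :: nat
  assumes "n \<ge> 2"
  shows "(\<forall>a\<in>SigmaB n. chi_lin n a \<in> SigmaD n)
    \<and> (\<forall>a\<in>SigmaB n. \<forall>b\<in>SigmaB n.
          chi_lin n (conv (B n) a b) = conv (D n) (chi_lin n a) (chi_lin n b))
    \<and> (\<forall>J. J \<subseteq> {2..<n} \<longrightarrow>
          chi_lin n (YB n J) = YD n (L ` J)
        \<and> chi_lin n (YB n ({1} \<union> J)) =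
            (\<lambda>v. YD n ({One'} \<union> L ` J) v + YD n ({L 1} \<union> L ` J) v + YD n ({One', L 1} \<union> L ` J) v)
        \<and> chi_lin n (YB n ({0} \<union> J)) =
            (\<lambda>v. YD n (L ` J) v + YD n ({One'} \<union> L ` J) v + YD n ({L 1} \<union> L ` J) v)
        \<and> chi_lin n (YB n ({0, 1} \<union> J)) = YD n ({One', L 1} \<union> L ` J)
        \<and> chi_lin n (XB n J) = XD n (L ` J)
        \<and> chi_lin n (XB n ({1} \<union> J)) = XD n ({One', L 1} \<union> L ` J)
        \<and> chi_lin n (XB n ({0} \<union> J)) = (\<lambda>v. XD n ({One'} \<union> L ` J) v + XD n ({L 1} \<union> L ` J) v)
        \<and> chi_lin n (XB n ({0, 1} \<union> J)) = (\<lambda>v. 2 * XD n ({One', L 1} \<union> L ` J) v))"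
proof (intro conjI ballI allI impI)
  have n1: "n \<ge> 1" using assms by simp
  fix a assume "a \<in> SigmaB n" then show "chi_lin n a \<in> SigmaD n" using chi_SigmaD[OF assms] by blast
next
  have n1: "n \<ge> 1" using assms by simp
  fix a b assume "a \<in> SigmaB n" "b \<in> SigmaB n"
  then show "chi_lin n (conv (B n) a b) = conv (D n) (chi_lin n a) (chi_lin n b)"
    using morphism[OF n1] by blast
next
  fix J :: "nat set" assume J: "J \<subseteq> {2..<n}"
  have n1: "n \<ge> 1" using assms by simp
  note I = identities[OF assms J]
  note Z = out_zero[OF n1]
  show "chi_lin n (YB n J) = YD n (L ` J)"
    by (rule extD[OF n1]) (erule I(1), simp add: Z)
  show "chi_lin n (YB n ({1} \<union> J)) =
            (\<lambda>v. YD n ({One'} \<union> L ` J) v + YD n ({L 1} \<union> L ` J) v + YD n ({One', L 1} \<union> L ` J) v)"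
    by (rule extD[OF n1]) (erule I(2), simp add: Z)
  show "chi_lin n (YB n ({0} \<union> J)) =
            (\<lambda>v. YD n (L ` J) v + YD n ({One'} \<union> L ` J) v + YD n ({L 1} \<union> L ` J) v)"
    by (rule extD[OF n1]) (erule I(3), simp add: Z)
  show "chi_lin n (YB n ({0, 1} \<union> J)) = YD n ({One', L 1} \<union> L ` J)"
    by (rule extD[OF n1]) (erule I(4), simp add: Z)
  show "chi_lin n (XB n J) = XD n (L ` J)"
    by (rule extD[OF n1]) (erule I(5), simp add: Z)
  show "chi_lin n (XB n ({1} \<union> J)) = XD n ({One', L 1} \<union> L ` J)"
    by (rule extD[OF n1]) (erule I(6), simp add: Z)
  show "chi_lin n (XB n ({0} \<union> J)) = (\<lambda>v. XD n ({One'} \<union> L ` J) v + XD n ({L 1} \<union> L ` J) v)"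
    by (rule extD[OF n1]) (erule I(7), simp add: Z)
  show "chi_lin n (XB n ({0, 1} \<union> J)) = (\<lambda>v. 2 * XD n ({One', L 1} \<union> L ` J) v)"
    by (rule extD[OF n1]) (erule I(8), simp add: Z)
qed

end
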